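(* Let $f:\mathbb{R}^n\to\mathbb{R}^n$ be locally Lipschitz with $f(0)=0$ and suppose there exists a convex Lyapunov function $V\in C^1(\mathbb{R}^n;\mathbb{R}^+)$ for $\dot z=f(z)$. Let $\bar\varphi:\mathbb{R}^n\to(0,+\infty)$ be continuous such that for every $x\in\mathbb{R}^n$ and $h\in[0,\bar\varphi(x)]$ the equation $Y=x+hf(Y)$ has a unique solution $Y\in\mathbb{R}^n$. Then for each $r>0$, $0\in\mathbb{R}^n$ is URGAS for the hybrid system (2.2) with $\varphi(x):=\min\{\bar\varphi(x),r\}$ and $F(h,x):=f(Y)$, where $Y$ is the solution of $Y=x+hf(Y)$ (implicit Euler method).
   Context: The hybrid system (2.2): for each locally bounded $u:\mathbb{R}^+\to\mathbb{R}^+$ and $x_0$, $\tau_0=0$, $x(0)=x_0$, $h_i=\varphi(x(\tau_i))\exp(-u(\tau_i))$, $\tau_{i+1}=\tau_i+h_i$, $x(t)=x(\tau_i)+(t-\tau_i)F(h_i,x(\tau_i))$ on $[\tau_i,\tau_{i+1}]$; solution $x(t,x_0;u)$. URGAS: (a) for every $\varepsilon>0$ there is $\delta>0$ with $|x_0|<\delta\Rightarrow|x(t,x_0;u)|<\varepsilon$ for all $t\ge0$ and all $u$; (b) for every $R$, $\sup\{|x(t,x_0;u)|:t\ge0,|x_0|\le R,u\}<\infty$; (c) for all $\varepsilon,R$ there is $T$ with $|x(t,x_0;u)|\le\varepsilon$ for $t\ge T$, $|x_0|\le R$, all locally bounded $u\ge0$. A Lyapunov function for $\dot z=f(z)$ is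 a positive definite, radially unbounded $C^1$ function $V$ with $\nabla V(x)f(x)<0$ for $x\ne0$. *)

theory Defs
  imports "HOL-Analysis.Analysis"
begin

definition loc_lipschitz :: "('a::metric_space \<Rightarrow> 'b::metric_space) \<Rightarrow> bool" where
  "loc_lipschitz f \<longleftrightarrow> (\<forall>x. \<exists>\<delta>>0. \<exists>L. L-lipschitz_on (ball x \<delta>) f)"

definition lyapunov_function ::
  "(real^'n \<Rightarrow> real) \<Rightarrow> (real^'n \<Rightarrow> real^'n) \<Rightarrow> bool" where
  "lyapunov_function V f \<longleftrightarrow>
     V 0 = 0 \<and> (\<forall>x. x \<noteq> 0 \<longrightarrow> V x > 0) \<and>
     filterlim V at_top at_infinity \<and>
     (\<exists>g. continuous_on UNIV g \<and>
          (\<forall>x. (V has_derivative (\<lambda>v. g x \<bullet> v)) (at x)) \<and>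
          (\<forall>x. x \<noteq> 0 \<longrightarrow> g x \<bullet> f x < 0))"

definition admissible_input :: "(real \<Rightarrow> real) \<Rightarrow> bool" where
  "admissible_input u \<longleftrightarrow> (\<forall>t\<ge>0. u t \<ge> 0) \<and> (\<forall>T. bounded (u ` {0..T}))"

text \<open>Hybrid system (2.2): the i-th sampling time tau_i together with x(tau_i).\<close>
primrec hyb_node ::
  "('a::real_normed_vector \<Rightarrow> real) \<Rightarrow> (real \<Rightarrow> 'a \<Rightarrow> 'a) \<Rightarrow> (real \<Rightarrow> real) \<Rightarrow> 'a \<Rightarrow> nat \<Rightarrow> real \<times> 'a"
where
  "hyb_node \<phi> F u x0 0 = (0, x0)"
| "hyb_node \<phi> F u x0 (Suc i) =
     (let \<tau> = fst (hyb_node \<phi> F u x0 i); x = snd (hyb_node \<phi> F u x0 i);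
          h = \<phi> x * exp (- u \<tau>) in (\<tau> + h, x + h *\<^sub>R F h x))"

definition hyb_tau where "hyb_tau \<phi> F u x0 i = fst (hyb_node \<phi> F u x0 i)"

definition hyb_step where
  "hyb_step \<phi> F u x0 i = \<phi> (snd (hyb_node \<phi> F u x0 i)) * exp (- u (hyb_tau \<phi> F u x0 i))"

definition hyb_sol where
  "hyb_sol \<phi> F u x0 i t = snd (hyb_node \<phi> F u x0 i)
      + (t - hyb_tau \<phi> F u x0 i) *\<^sub>R F (hyb_step \<phi> F u x0 i) (snd (hyb_node \<phi> F u x0 i))"

text \<open>Every t \<ge> 0 in the domain of the solution lies in
  some [tau_i, tau_(i+1)]; we also require the solution to be defined on all of R+
  (tau_i \<rightarrow> \<infinity>).\<close>
definition URGAS ::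
  "('a::real_normed_vector \<Rightarrow> real) \<Rightarrow> (real \<Rightarrow> 'a \<Rightarrow> 'a) \<Rightarrow> bool" where
  "URGAS \<phi> F \<longleftrightarrow>
     (\<forall>x0 u. admissible_input u \<longrightarrow> filterlim (hyb_tau \<phi> F u x0) at_top sequentially) \<and>
     (\<forall>\<epsilon>>0. \<exists>\<delta>>0. \<forall>x0 u i t. admissible_input u \<and> norm x0 < \<delta> \<and>
        t \<in> {hyb_tau \<phi> F u x0 i .. hyb_tau \<phi> F u x0 (Suc i)}
        \<longrightarrow> norm (hyb_sol \<phi> F u x0 i t) < \<epsilon>) \<and>
     (\<forall>R. \<exists>M. \<forall>x0 u i t. admissible_input u \<and> norm x0 \<le> R \<and>
        t \<in> {hyb_tau \<phi> F u x0 i .. hyb_tau \<phi> F u x0 (Suc i)}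
        \<longrightarrow> norm (hyb_sol \<phi> F u x0 i t) \<le> M) \<and>
     (\<forall>\<epsilon>>0. \<forall>R. \<exists>T. \<forall>x0 u i t. admissible_input u \<and> norm x0 \<le> R \<and>
        t \<in> {hyb_tau \<phi> F u x0 i .. hyb_tau \<phi> F u x0 (Suc i)} \<and> t \<ge> T
        \<longrightarrow> norm (hyb_sol \<phi> F u x0 i t) \<le> \<epsilon>)"

end

theory Submission
  imports Defs
begin

lemma tangent_ineq:
  fixes V :: "'a::real_normed_vector \<Rightarrow> real"
  assumes cv: "convex_on UNIV V" and dV: "(V has_derivative D) (at x)"
  shows "V x + D (y - x) \<le> V y"
proof -
  define p where "p s = V (x + s *\<^sub>R (y - x))" for s :: real
  have cp: "convex_on UNIV p"
  proof (rule convex_onI)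
    fix t a b :: real assume "0 < t" "t < 1"
    have "x + ((1 - t) * a + t * b) *\<^sub>R (y - x) = (1 - t) *\<^sub>R (x + a *\<^sub>R (y - x)) + t *\<^sub>R (x + b *\<^sub>R (y - x))"
      by (simp add: algebra_simps)
    then show "p ((1 - t) *\<^sub>R a + t *\<^sub>R b) \<le> (1 - t) * p a + t * p b"
      unfolding p_def using convex_onD[OF cv, of t] \<open>0 < t\<close> \<open>t < 1\<close> by simp
  qed simp
  have lin: "linear D" using dV has_derivative_linear by blast
  have d1: "((\<lambda>s. x + s *\<^sub>R (y - x)) has_derivative (\<lambda>s. s *\<^sub>R (y - x))) (at 0)"
    by (auto intro!: derivative_eq_intros)
  have "(p has_derivative (\<lambda>s. D (s *\<^sub>R (y - x)))) (at 0)"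
    unfolding p_def using has_derivative_compose[OF d1, of V D] dV by simp
  moreover have "(\<lambda>s. D (s *\<^sub>R (y - x))) = (\<lambda>s. D (y - x) * s)"
    using linear_scale[OF lin] by (auto simp: mult.commute)
  ultimately have "(p has_field_derivative D (y - x)) (at 0 within UNIV)"
    by (simp add: has_field_derivative_def)
  from convex_on_imp_above_tangent[OF cp connected_UNIV _ _ this, of 1]
  have "p 1 - p 0 \<ge> D (y - x)" by simp
  then show ?thesis unfolding p_def by simp
qed

lemma node_Suc:
  "hyb_tau \<phi> F u x0 (Suc i) = hyb_tau \<phi> F u x0 i + hyb_step \<phi> F u x0 i"
  "snd (hyb_node \<phi> F u x0 (Suc i)) = snd (hyb_node \<phi> F u x0 i)
     + hyb_step \<phi> F u x0 i *\<^sub>R F (hyb_step \<phi> F u x0 i) (snd (hyb_node \<phi> F u x0 i))"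
  by (simp_all add: hyb_tau_def hyb_step_def Let_def)

lemma hyb_tau_0: "hyb_tau \<phi> F u x0 0 = 0" and hyb_node_0: "snd (hyb_node \<phi> F u x0 0) = x0"
  by (simp_all add: hyb_tau_def)

lemma pos_lower_bound:
  fixes q :: "'a::topological_space \<Rightarrow> real"
  assumes "compact K" "continuous_on K q" "\<forall>z\<in>K. q z > 0"
  shows "\<exists>m>0. \<forall>z\<in>K. m \<le> q z"
proof (cases "K = {}")
  case True then show ?thesis by (intro exI[of _ 1]) auto
next
  case False
  from continuous_attains_inf[OF assms(1) False assms(2)] obtain z0 where
    "z0 \<in> K" "\<forall>y\<in>K. q z0 \<le> q y" by blast
  then show ?thesis using assms(3) by (intro exI[of _ "q z0"]) auto
qed

locale hyb_setup =
  fixes f :: "real^'n \<Rightarrow> real^'n" and V :: "real^'n \<Rightarrow> real" and g :: "real^'n \<Rightarrow> real^'n"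
    and pb :: "real^'n \<Rightarrow> real" and r :: real
  assumes lip: "loc_lipschitz f"
    and convV: "convex_on UNIV V" and Vnn: "\<And>x. V x \<ge> 0"
    and V0: "V 0 = 0" and Vpos: "\<And>x. x \<noteq> 0 \<Longrightarrow> V x > 0"
    and Vinf: "filterlim V at_top at_infinity"
    and gcont: "continuous_on UNIV g"
    and Vder: "\<And>x. (V has_derivative (\<lambda>v. g x \<bullet> v)) (at x)"
    and gdec: "\<And>x. x \<noteq> 0 \<Longrightarrow> g x \<bullet> f x < 0"
    and pbcont: "continuous_on UNIV pb" and pbpos: "\<And>x. pb x > 0"
    and uniq: "\<And>x h. 0 \<le> h \<Longrightarrow> h \<le> pb x \<Longrightarrow> \<exists>!Y. Y = x + h *\<^sub>R f Y"
    and rpos: "r > 0" and f0: "f 0 = 0"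
begin

abbreviation "phi \<equiv> (\<lambda>x. min (pb x) r)"
abbreviation "FF \<equiv> (\<lambda>h x. f (THE Y. Y = x + h *\<^sub>R f Y))"
abbreviation "X u x0 i \<equiv> snd (hyb_node phi FF u x0 i)"
abbreviation "tau u x0 i \<equiv> hyb_tau phi FF u x0 i"
abbreviation "hs u x0 i \<equiv> hyb_step phi FF u x0 i"

lemma contV: "continuous_on UNIV V"
  by (intro continuous_at_imp_continuous_on ballI has_derivative_continuous[OF Vder])

lemma contf: "continuous_on UNIV f"
proof -
  have "isCont f x" for x
  proof -
    obtain d L where "d > 0" "L-lipschitz_on (ball x d) f" using lip unfolding loc_lipschitz_def by blast
    then have "continuous_on (ball x d) f" using lipschitz_on_continuous_on by blast
    then show ?thesis using \<open>d > 0\<close> by (simp add: continuous_on_eq_continuous_at)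
  qed
  then show ?thesis by (simp add: continuous_at_imp_continuous_on)
qed

lemma sub_bounded: "\<exists>B. \<forall>z. V z \<le> M \<longrightarrow> norm z < B"
proof -
  have "eventually (\<lambda>z. M + 1 \<le> V z) at_infinity"
    using Vinf unfolding filterlim_at_top by blast
  then obtain b where b: "\<And>z. norm z \<ge> b \<Longrightarrow> M + 1 \<le> V z"
    unfolding eventually_at_infinity by blast
  have "norm z < b" if "V z \<le> M" for z
  proof (rule ccontr)
    assume "\<not> norm z < b"
    then have "M + 1 \<le> V z" using b by simp
    then show False using that by simp
  qed
  then show ?thesis by blast
qed

lemma K_compact: "compact {z. a \<le> norm z \<and> V z \<le> M}"
unfolding compact_eq_bounded_closed
proof (rule conjI[rotated])
  show "closed {z. a \<le> norm z \<and> V z \<le> M}"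
    by (intro closed_Collect_conj closed_Collect_le continuous_on_const continuous_on_norm_id) (rule contV)
  obtain B where B: "\<forall>z. V z \<le> M \<longrightarrow> norm z < B" using sub_bounded by blast
  have "\<forall>z\<in>{z. a \<le> norm z \<and> V z \<le> M}. norm z \<le> B" using B by (auto intro: less_imp_le)
  then show "bounded {z. a \<le> norm z \<and> V z \<le> M}"
    unfolding bounded_iff by blast
qed

lemma small_level: assumes "\<epsilon> > 0" shows "\<exists>\<eta>>0. \<forall>z. V z \<le> \<eta> \<longrightarrow> norm z < \<epsilon>"
proof -
  have "\<exists>m>0. \<forall>z\<in>{z. \<epsilon> \<le> norm z \<and> V z \<le> 1}. m \<le> V z"
    using assms by (intro pos_lower_bound K_compact continuous_on_subset[OF contV]) (auto intro!: Vpos)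
  then obtain m where m: "m > 0" "\<And>z. \<epsilon> \<le> norm z \<Longrightarrow> V z \<le> 1 \<Longrightarrow> m \<le> V z" by auto
  have "norm z < \<epsilon>" if "V z \<le> min (m/2) 1" for z
  proof (rule ccontr)
    assume "\<not> norm z < \<epsilon>"
    then have "m \<le> V z" using m(2)[of z] that by linarith
    then show False using that m(1) by linarith
  qed
  then show ?thesis using m(1) by (intro exI[of _ "min (m/2) 1"]) auto
qed

lemma small_cont: assumes "\<eta> > 0" shows "\<exists>\<delta>>0. \<forall>z. norm z < \<delta> \<longrightarrow> V z < \<eta>"
proof -
  have "isCont V 0" using contV by (simp add: continuous_on_eq_continuous_at)
  then obtain d where "d > 0" "\<forall>z. dist z 0 < d \<longrightarrow> dist (V z) (V 0) < \<eta>"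
    using assms unfolding continuous_at_eps_delta by blast
  then show ?thesis using V0 by (intro exI[of _ d]) (auto simp: dist_norm)
qed

lemma cball_V: "\<exists>M. \<forall>z. norm z \<le> R \<longrightarrow> V z \<le> M"
proof -
  have "compact (V ` cball 0 R)"
    by (intro compact_continuous_image continuous_on_subset[OF contV]) auto
  then obtain M where "\<forall>y\<in>V ` cball 0 R. norm y \<le> M"
    using compact_imp_bounded bounded_iff by metis
  then show ?thesis by (intro exI[of _ M]) (force simp: abs_le_iff)
qed

lemma stepY: assumes "0 \<le> h" "h \<le> pb x"
  shows "(THE Y. Y = x + h *\<^sub>R f Y) = x + h *\<^sub>R f (THE Y. Y = x + h *\<^sub>R f Y)"
  using theI'[OF uniq[OF assms]] .

lemma stepV: assumes "Y = x + h *\<^sub>R f Y"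
  shows "V Y - h * (g Y \<bullet> f Y) \<le> V x"
proof -
  have "V Y + g Y \<bullet> (x - Y) \<le> V x" using tangent_ineq[OF convV Vder, of Y x] .
  moreover have "x - Y = - (h *\<^sub>R f Y)" using assms by (simp add: algebra_simps)
  ultimately show ?thesis by (simp add: inner_minus_right)
qed

lemma gf_nonpos: "g Y \<bullet> f Y \<le> 0"
  using gdec[of Y] f0 by (cases "Y = 0") auto

lemma hs_eq: "hs u x0 i = phi (X u x0 i) * exp (- u (tau u x0 i))"
  by (simp add: hyb_step_def)

lemma hs_pos: "hs u x0 i > 0"
  using pbpos rpos by (simp add: hs_eq)

lemma tau_Suc: "tau u x0 (Suc i) = tau u x0 i + hs u x0 i"
  by (rule node_Suc(1))

lemma tau_nn: "tau u x0 i \<ge> 0"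
proof (induction i)
  case 0 then show ?case by (simp add: hyb_tau_0)
next
  case (Suc i) then show ?case using hs_pos[of u x0 i] by (simp add: tau_Suc)
qed

lemma hs_le: assumes "admissible_input u"
  shows "hs u x0 i \<le> pb (X u x0 i)" "hs u x0 i \<le> r"
proof -
  have "u (tau u x0 i) \<ge> 0" using assms tau_nn unfolding admissible_input_def by blast
  then have e: "exp (- u (tau u x0 i)) \<le> 1" by simp
  have "hs u x0 i \<le> phi (X u x0 i)"
    unfolding hs_eq using e less_imp_le[OF pbpos[of "X u x0 i"]] less_imp_le[OF rpos]
    by (intro mult_left_le) auto
  then show "hs u x0 i \<le> pb (X u x0 i)" "hs u x0 i \<le> r" by auto
qed

lemma X_Suc: assumes "admissible_input u"
  shows "X u x0 (Suc i) = X u x0 i + hs u x0 i *\<^sub>R f (X u x0 (Suc i))"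
    and "X u x0 (Suc i) = (THE Y. Y = X u x0 i + hs u x0 i *\<^sub>R f Y)"
proof -
  show 2: "X u x0 (Suc i) = (THE Y. Y = X u x0 i + hs u x0 i *\<^sub>R f Y)"
    using stepY[OF less_imp_le[OF hs_pos] hs_le(1)[OF assms]] node_Suc(2)[of phi FF u x0 i]
    by simp
  show "X u x0 (Suc i) = X u x0 i + hs u x0 i *\<^sub>R f (X u x0 (Suc i))"
    unfolding 2 by (rule stepY[OF less_imp_le[OF hs_pos] hs_le(1)[OF assms]])
qed

lemma V_dec: assumes "admissible_input u"
  shows "V (X u x0 (Suc i)) - hs u x0 i * (g (X u x0 (Suc i)) \<bullet> f (X u x0 (Suc i))) \<le> V (X u x0 i)"
  by (rule stepV[OF X_Suc(1)[OF assms]])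

lemma V_mono: assumes "admissible_input u"
  shows "V (X u x0 (Suc i)) \<le> V (X u x0 i)"
proof -
  have "hs u x0 i * (g (X u x0 (Suc i)) \<bullet> f (X u x0 (Suc i))) \<le> 0"
    using gf_nonpos less_imp_le[OF hs_pos] by (rule mult_nonneg_nonpos[rotated])
  then show ?thesis using V_dec[OF assms, of x0 i] by linarith
qed

lemma V_le0: assumes "admissible_input u"
  shows "V (X u x0 i) \<le> V x0"
proof (induction i)
  case 0 then show ?case by (simp add: hyb_node_0)
next
  case (Suc i) then show ?case using V_mono[OF assms, of x0 i] by simp
qed

lemma V_sol: assumes "admissible_input u" "t \<in> {tau u x0 i .. tau u x0 (Suc i)}"
  shows "V (hyb_sol phi FF u x0 i t) \<le> V (X u x0 i)"
proof -
  define h where "h = hs u x0 i"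
  define Y where "Y = X u x0 (Suc i)"
  define x where "x = X u x0 i"
  define s where "s = (t - tau u x0 i) / h"
  have h: "h > 0" using hs_pos h_def by simp
  have Y: "Y = x + h *\<^sub>R f Y" unfolding Y_def x_def h_def by (rule X_Suc(1)[OF assms(1)])
  have FF: "FF h x = f Y" unfolding Y_def x_def h_def using X_Suc(2)[OF assms(1)] by simp
  have t1: "tau u x0 i \<le> t" "t \<le> tau u x0 i + h"
    using assms(2) unfolding h_def tau_Suc by auto
  have s01: "0 \<le> s" "s \<le> 1" using t1 h unfolding s_def by (auto simp: divide_le_eq)
  have sh: "t - tau u x0 i = s * h" using h unfolding s_def by simp
  have "hyb_sol phi FF u x0 i t = x + (t - tau u x0 i) *\<^sub>R f Y"
    unfolding hyb_sol_def x_def[symmetric] h_def[symmetric] FF[symmetric] by simp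
  also have "\<dots> = x + s *\<^sub>R (h *\<^sub>R f Y)" unfolding sh by simp
  also have "\<dots> = (1 - s) *\<^sub>R x + s *\<^sub>R Y"
    by (subst (2) Y) (simp add: algebra_simps)
  finally have e: "hyb_sol phi FF u x0 i t = (1 - s) *\<^sub>R x + s *\<^sub>R Y" .
  have "V ((1 - s) *\<^sub>R x + s *\<^sub>R Y) \<le> (1 - s) * V x + s * V Y"
    using convex_onD[OF convV] s01 by simp
  moreover have "V Y \<le> V x" unfolding Y_def x_def by (rule V_mono[OF assms(1)])
  then have "s * V Y \<le> s * V x" using s01(1) by (rule mult_left_mono)
  ultimately show ?thesis unfolding e x_def[symmetric] by (simp add: algebra_simps)
qed

lemma part1: assumes adm: "admissible_input u"
  shows "filterlim (tau u x0) at_top sequentially"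
  unfolding filterlim_at_top
proof (intro allI)
  fix Z :: real
  show "eventually (\<lambda>i. Z \<le> tau u x0 i) sequentially"
  proof (rule ccontr)
    assume ne: "\<not> ?thesis"
    have mono: "incseq (tau u x0)"
      by (rule incseq_SucI) (simp add: tau_Suc less_imp_le[OF hs_pos])
    have lt: "tau u x0 i < Z" for i
    proof (rule ccontr)
      assume "\<not> tau u x0 i < Z"
      then have "\<forall>j\<ge>i. Z \<le> tau u x0 j"
      proof (intro allI impI)
        fix j assume "i \<le> j" "\<not> tau u x0 i < Z"
        then have "tau u x0 i \<le> tau u x0 j" using mono by (simp add: incseq_def)
        then show "Z \<le> tau u x0 j" using \<open>\<not> tau u x0 i < Z\<close> by linarith
      qed
      then have "eventually (\<lambda>j. Z \<le> tau u x0 j) sequentially"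
        unfolding eventually_sequentially by blast
      with ne show False by simp
    qed
    have "bounded (u ` {0..Z})" using adm by (simp add: admissible_input_def)
    then obtain B where "\<forall>y\<in>u ` {0..Z}. norm y \<le> B" unfolding bounded_iff by blast
    then have B: "\<forall>t\<in>{0..Z}. norm (u t) \<le> B" by simp
    have "\<exists>m>0. \<forall>z\<in>{z. 0 \<le> norm z \<and> V z \<le> V x0}. m \<le> pb z"
      using pbpos by (intro pos_lower_bound K_compact continuous_on_subset[OF pbcont]) auto
    then obtain m where m: "m > 0" "\<And>z. V z \<le> V x0 \<Longrightarrow> m \<le> pb z" by auto
    define c where "c = min m r * exp (- B)"
    have c: "c > 0" unfolding c_def using m rpos by simp
    have hc: "c \<le> hs u x0 i" for i
    proof -
      have "tau u x0 i \<in> {0..Z}" using tau_nn[of u x0 i] lt[of i] by simp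
      then have "norm (u (tau u x0 i)) \<le> B" using B by blast
      then have "u (tau u x0 i) \<le> B" by simp
      then have e: "exp (- B) \<le> exp (- u (tau u x0 i))" by simp
      have "m \<le> pb (X u x0 i)" using m(2)[OF V_le0[OF adm]] .
      then have "min m r \<le> phi (X u x0 i)" by (simp add: min_def)
      then show ?thesis unfolding c_def hs_eq
        using e m(1) rpos by (intro mult_mono) auto
    qed
    have ic: "real i * c \<le> tau u x0 i" for i
    proof (induction i)
      case 0 then show ?case by (simp add: hyb_tau_0)
    next
      case (Suc i) then show ?case using hc[of i] by (simp add: tau_Suc distrib_right)
    qed
    obtain N where "Z < real N * c" using reals_Archimedean3[OF c] by blast
    then show False using ic[of N] lt[of N] by linarith
  qed
qed

lemma urgas: "URGAS phi FF"
  unfolding URGAS_def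
proof (intro conjI allI impI)
  show "filterlim (hyb_tau phi FF u x0) at_top sequentially" if "admissible_input u" for x0 u
    using part1[OF that] .
next
  fix \<epsilon> :: real assume "\<epsilon> > 0"
  obtain \<eta> where \<eta>: "\<eta> > 0" "\<And>z. V z \<le> \<eta> \<Longrightarrow> norm z < \<epsilon>" using small_level[OF \<open>\<epsilon> > 0\<close>] by auto
  obtain \<delta> where \<delta>: "\<delta> > 0" "\<And>z. norm z < \<delta> \<Longrightarrow> V z < \<eta>" using small_cont[OF \<eta>(1)] by auto
  show "\<exists>\<delta>>0. \<forall>x0 u i t. admissible_input u \<and> norm x0 < \<delta> \<and>
        t \<in> {hyb_tau phi FF u x0 i .. hyb_tau phi FF u x0 (Suc i)}
        \<longrightarrow> norm (hyb_sol phi FF u x0 i t) < \<epsilon>"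
  proof (intro exI[of _ \<delta>] conjI allI impI)
    fix x0 u i t assume a: "admissible_input u \<and> norm x0 < \<delta> \<and>
        t \<in> {hyb_tau phi FF u x0 i .. hyb_tau phi FF u x0 (Suc i)}"
    have "V (hyb_sol phi FF u x0 i t) \<le> V x0"
      using V_sol[of u t x0 i] V_le0[of u x0 i] a by linarith
    moreover have "V x0 < \<eta>" using \<delta>(2)[of x0] a by blast
    ultimately have "V (hyb_sol phi FF u x0 i t) \<le> \<eta>" by linarith
    then show "norm (hyb_sol phi FF u x0 i t) < \<epsilon>" by (rule \<eta>(2))
  qed (rule \<delta>(1))
next
  fix R :: real
  obtain M where M: "\<And>z. norm z \<le> R \<Longrightarrow> V z \<le> M" using cball_V by blast
  obtain B where B: "\<And>z. V z \<le> M \<Longrightarrow> norm z < B" using sub_bounded by blast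
  show "\<exists>M. \<forall>x0 u i t. admissible_input u \<and> norm x0 \<le> R \<and>
        t \<in> {hyb_tau phi FF u x0 i .. hyb_tau phi FF u x0 (Suc i)}
        \<longrightarrow> norm (hyb_sol phi FF u x0 i t) \<le> M"
  proof (intro exI[of _ B] allI impI)
    fix x0 u i t assume a: "admissible_input u \<and> norm x0 \<le> R \<and>
        t \<in> {hyb_tau phi FF u x0 i .. hyb_tau phi FF u x0 (Suc i)}"
    have "V (hyb_sol phi FF u x0 i t) \<le> M"
      using V_sol[of u t x0 i] V_le0[of u x0 i] a M[of x0] by linarith
    then have "norm (hyb_sol phi FF u x0 i t) < B" by (rule B)
    then show "norm (hyb_sol phi FF u x0 i t) \<le> B" by (rule less_imp_le)
  qed
next
  fix \<epsilon> R :: real assume "\<epsilon> > 0"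
  obtain M where M: "\<And>z. norm z \<le> R \<Longrightarrow> V z \<le> M" using cball_V by blast
  obtain \<eta> where \<eta>: "\<eta> > 0" "\<And>z. V z \<le> \<eta> \<Longrightarrow> norm z < \<epsilon>" using small_level[OF \<open>\<epsilon> > 0\<close>] by auto
  obtain \<delta> where \<delta>: "\<delta> > 0" "\<And>z. norm z < \<delta> \<Longrightarrow> V z < \<eta>" using small_cont[OF \<eta>(1)] by auto
  have "\<exists>c>0. \<forall>z\<in>{z. \<delta> \<le> norm z \<and> V z \<le> M}. c \<le> - (g z \<bullet> f z)"
  proof (intro pos_lower_bound K_compact ballI)
    show "continuous_on {z. \<delta> \<le> norm z \<and> V z \<le> M} (\<lambda>z. - (g z \<bullet> f z))"
      by (intro continuous_on_minus continuous_on_inner continuous_on_subset[OF gcont]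
          continuous_on_subset[OF contf]) auto
    fix z assume "z \<in> {z. \<delta> \<le> norm z \<and> V z \<le> M}"
    then have "z \<noteq> 0" using \<delta>(1) by auto
    then show "0 < - (g z \<bullet> f z)" using gdec by simp
  qed
  then obtain c where c: "c > 0" "\<And>z. \<delta> \<le> norm z \<Longrightarrow> V z \<le> M \<Longrightarrow> c \<le> - (g z \<bullet> f z)" by auto
  have claim: "\<eta> < V (X u x0 i) \<longrightarrow> V (X u x0 i) + c * tau u x0 i \<le> V x0"
    if adm: "admissible_input u" and x0: "norm x0 \<le> R" for u x0 i
  proof (induction i)
    case 0 then show ?case by (simp add: hyb_tau_0 hyb_node_0)
  next
    case (Suc i)
    show ?case
    proof
      assume a: "\<eta> < V (X u x0 (Suc i))"
      then have "\<eta> < V (X u x0 i)" using V_mono[OF adm, of x0 i] by linarith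
      with Suc have IH: "V (X u x0 i) + c * tau u x0 i \<le> V x0" by blast
      have "\<delta> \<le> norm (X u x0 (Suc i))"
      proof (rule ccontr)
        assume "\<not> \<delta> \<le> norm (X u x0 (Suc i))"
        then have "V (X u x0 (Suc i)) < \<eta>" using \<delta>(2)[of "X u x0 (Suc i)"] by linarith
        then show False using a by linarith
      qed
      moreover have "V (X u x0 (Suc i)) \<le> M" using V_le0[OF adm, of x0 "Suc i"] M[OF x0] by linarith
      ultimately have cq: "c \<le> - (g (X u x0 (Suc i)) \<bullet> f (X u x0 (Suc i)))" using c(2) by blast
      have "hs u x0 i * c \<le> hs u x0 i * (- (g (X u x0 (Suc i)) \<bullet> f (X u x0 (Suc i))))"
        using cq less_imp_le[OF hs_pos] by (rule mult_left_mono)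
      moreover have "c * tau u x0 (Suc i) = c * tau u x0 i + hs u x0 i * c"
        by (simp add: tau_Suc distrib_left mult.commute)
      moreover have "hs u x0 i * (- (g (X u x0 (Suc i)) \<bullet> f (X u x0 (Suc i))))
          = - (hs u x0 i * (g (X u x0 (Suc i)) \<bullet> f (X u x0 (Suc i))))" by simp
      ultimately show "V (X u x0 (Suc i)) + c * tau u x0 (Suc i) \<le> V x0"
        using IH V_dec[OF adm, of x0 i] by linarith
    qed
  qed
  show "\<exists>T. \<forall>x0 u i t. admissible_input u \<and> norm x0 \<le> R \<and>
        t \<in> {hyb_tau phi FF u x0 i .. hyb_tau phi FF u x0 (Suc i)} \<and> t \<ge> T
        \<longrightarrow> norm (hyb_sol phi FF u x0 i t) \<le> \<epsilon>"
  proof (intro exI[of _ "M / c + r + 1"] allI impI)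
    fix x0 u i t assume a: "admissible_input u \<and> norm x0 \<le> R \<and>
        t \<in> {hyb_tau phi FF u x0 i .. hyb_tau phi FF u x0 (Suc i)} \<and> t \<ge> M / c + r + 1"
    then have adm: "admissible_input u" and x0: "norm x0 \<le> R" by auto
    have "tau u x0 (Suc i) \<le> tau u x0 i + r" using hs_le(2)[OF adm] by (simp add: tau_Suc)
    moreover have "t \<le> tau u x0 (Suc i)" "M / c + r + 1 \<le> t" using a by auto
    ultimately have tl: "M / c + 1 \<le> tau u x0 i" by linarith
    have "V (X u x0 i) \<le> \<eta>"
    proof (rule ccontr)
      assume "\<not> V (X u x0 i) \<le> \<eta>"
      then have "\<eta> < V (X u x0 i)" by linarith
      then have "V (X u x0 i) + c * tau u x0 i \<le> V x0" using claim[OF adm x0] by blast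
      then have "c * tau u x0 i \<le> M" using Vnn[of "X u x0 i"] M[OF x0] by linarith
      then have "tau u x0 i \<le> M / c" using c(1) by (simp add: pos_le_divide_eq mult.commute)
      then show False using tl by linarith
    qed
    then have "V (hyb_sol phi FF u x0 i t) \<le> \<eta>" using V_sol[OF adm, of t x0 i] a by linarith
    then have "norm (hyb_sol phi FF u x0 i t) < \<epsilon>" by (rule \<eta>(2))
    then show "norm (hyb_sol phi FF u x0 i t) \<le> \<epsilon>" by (rule less_imp_le)
  qed
qed

end

theorem theorem4p15:
  fixes f :: "real^'n \<Rightarrow> real^'n" and V :: "real^'n \<Rightarrow> real"
    and \<phi>bar :: "real^'n \<Rightarrow> real" and r :: real
  assumes "loc_lipschitz f" and "f 0 = 0"
    and "convex_on UNIV V" and "\<forall>x. V x \<ge> 0" and "lyapunov_function V f"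
    and "continuous_on UNIV \<phi>bar" and "\<forall>x. \<phi>bar x > 0"
    and "\<forall>x h. 0 \<le> h \<and> h \<le> \<phi>bar x \<longrightarrow> (\<exists>!Y. Y = x + h *\<^sub>R f Y)"
    and "r > 0"
  shows "URGAS (\<lambda>x. min (\<phi>bar x) r) (\<lambda>h x. f (THE Y. Y = x + h *\<^sub>R f Y))"
proof -
  from assms(5) obtain g where g: "V 0 = 0" "\<forall>x. x \<noteq> 0 \<longrightarrow> V x > 0"
    "filterlim V at_top at_infinity" "continuous_on UNIV g"
    "\<forall>x. (V has_derivative (\<lambda>v. g x \<bullet> v)) (at x)" "\<forall>x. x \<noteq> 0 \<longrightarrow> g x \<bullet> f x < 0"
    unfolding lyapunov_function_def by blast
  interpret hyb_setup f V g \<phi>bar r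
    using assms g by unfold_locales auto
  show ?thesis by (rule urgas)
qed

end
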